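(* Let $\mathcal M$ be an MDP and consider a relational reachability property $$\exists \sigma_1,\ldots,\sigma_n \in \Sigma^{\mathcal M}.~ \sum_{i=1}^{m} q_i \cdot \Pr^{\sigma_{k_i}}_{s_i}(\Diamond T_i) ~\mathsf{comp}~ q_{m+1} \qquad (\star)$$ as in the context. Let $\mathsf{Comb}=\{(s_i,k_i)\mid i=1,\ldots,m\}=\{c_1,\ldots,c_k\}$ (the distinct pairs of initial state and scheduler index occurring in $(\star)$), and for $c\in\mathsf{Comb}$ let $\mathit{ind}(c)=\{i\in\{1,\dots,m\}\mid (s_i,k_i)=c\}$. Then $(\star)$ holds in $\mathcal M$ if and only if $$\exists \sigma_{c_1},\ldots,\sigma_{c_k}\in \Sigma^{\mathcal M}.~ \sum_{i=1}^{k} \Big[\sum_{j\in \mathit{ind}(c_i)} q_j\cdot \Pr^{\sigma_{c_i}}_{s_j}(\Diamond T_j)\Big] ~\mathsf{comp}~ q_{m+1},$$ i.e., one may quantify over a separate (general) scheduler for each state–scheduler combination.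
   Context: An MDP is a triple $\mathcal M=(S,\mathrm{Act},P)$ where $S$ and $\mathrm{Act}$ are finite non-empty sets and $P:S\times\mathrm{Act}\times S\to[0,1]$ is such that for every $s\in S$ the set of enabled actions $\mathrm{Act}(s)=\{\alpha\mid \sum_{s'}P(s,\alpha,s')=1\}$ is non-empty and $\sum_{s'}P(s,\alpha,s')=0$ for $\alpha\notin\mathrm{Act}(s)$. A finite path is a sequence $s_0\alpha_0s_1\ldots\alpha_{n-1}s_n$ with $P(s_i,\alpha_i,s_{i+1})>0$. A (general, i.e. history-dependent randomized) scheduler is a function $\sigma$ mapping finite paths to probability distributions over $\mathrm{Act}$, supported on the enabled actions of the last state of the path; $\Sigma^{\mathcal M}$ is the set of all such schedulers. For a scheduler $\sigma$, state $s$ and $T\subseteq S$, $\Pr^{\sigma}_{s}(\Diamond T)$ is the probability of eventually reaching $T$ starting from $s$ in the Markov chain induced by $\sigma$. In $(\star)$: $m\ge n$ are naturals, $q_1,\ldots,q_{m+1}\in\mathbb Q$, $s_1,\ldots,s_m\in S$ (not necessarily distinct), $\{k_1,\ldots,k_m\}=\{1,\ldots,n\}$, $T_1,\ldots,T_m\subseteq S$ (not necessarily distinct), and $\mathsf{comp}\in\{>,\ge,\approx_\epsilon,\not\approx_\epsilon\mid \epsilon\in\mathbb Q_{\ge 0}\}$, where $r\approx_\epsilon r'$ iff $|r-r'|\le\epsilon$ and $r\not\approx_\epsilon r'$ iff $|r-r'|>\epsilon$. *)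

theory Defs
  imports "HOL-Probability.Probability"
begin

definition enabled :: "('s::finite \<Rightarrow> 'a::finite \<Rightarrow> 's \<Rightarrow> real) \<Rightarrow> 's \<Rightarrow> 'a set" where
  "enabled P s = {\<alpha>. (\<Sum>s'\<in>UNIV. P s \<alpha> s') = 1}"

definition is_mdp :: "('s::finite \<Rightarrow> 'a::finite \<Rightarrow> 's \<Rightarrow> real) \<Rightarrow> bool" where
  "is_mdp P \<longleftrightarrow> (\<forall>s \<alpha> s'. 0 \<le> P s \<alpha> s' \<and> P s \<alpha> s' \<le> 1)
     \<and> (\<forall>s. enabled P s \<noteq> {})
     \<and> (\<forall>s \<alpha>. \<alpha> \<notin> enabled P s \<longrightarrow> (\<Sum>s'\<in>UNIV. P s \<alpha> s') = 0)"

text \<open>A finite path s0 a0 s1 ... a(n-1) sn is represented as (s0, [(a0,s1),...,(a(n-1),sn)]).\<close>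
type_synonym ('s, 'a) fpath = "'s \<times> ('a \<times> 's) list"

definition lst :: "('s, 'a) fpath \<Rightarrow> 's" where
  "lst p = (if snd p = [] then fst p else snd (last (snd p)))"

definition ext :: "('s, 'a) fpath \<Rightarrow> 'a \<Rightarrow> 's \<Rightarrow> ('s, 'a) fpath" where
  "ext p \<alpha> s' = (fst p, snd p @ [(\<alpha>, s')])"

fun is_path :: "('s \<Rightarrow> 'a \<Rightarrow> 's \<Rightarrow> real) \<Rightarrow> 's \<Rightarrow> ('a \<times> 's) list \<Rightarrow> bool" where
  "is_path P s [] = True"
| "is_path P s ((\<alpha>, s') # xs) = (P s \<alpha> s' > 0 \<and> is_path P s' xs)"

definition schedulers :: "('s::finite \<Rightarrow> 'a::finite \<Rightarrow> 's \<Rightarrow> real) \<Rightarrow> (('s, 'a) fpath \<Rightarrow> 'a pmf) set" where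
  "schedulers P = {\<sigma>. \<forall>p. is_path P (fst p) (snd p) \<longrightarrow> set_pmf (\<sigma> p) \<subseteq> enabled P (lst p)}"

text \<open>Probability, in the Markov chain induced by \<sigma> started in the history h,
  of reaching T within n further steps.\<close>
primrec reach_le :: "('s::finite \<Rightarrow> 'a::finite \<Rightarrow> 's \<Rightarrow> real) \<Rightarrow> (('s, 'a) fpath \<Rightarrow> 'a pmf)
    \<Rightarrow> 's set \<Rightarrow> ('s, 'a) fpath \<Rightarrow> nat \<Rightarrow> real" where
  "reach_le P \<sigma> T h 0 = (if lst h \<in> T then 1 else 0)"
| "reach_le P \<sigma> T h (Suc n) = (if lst h \<in> T then 1 else
      (\<Sum>\<alpha>\<in>UNIV. pmf (\<sigma> h) \<alpha> * (\<Sum>s'\<in>UNIV. P (lst h) \<alpha> s' * reach_le P \<sigma> T (ext h \<alpha> s') n)))"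

definition PrReach :: "('s::finite \<Rightarrow> 'a::finite \<Rightarrow> 's \<Rightarrow> real) \<Rightarrow> (('s, 'a) fpath \<Rightarrow> 'a pmf)
    \<Rightarrow> 's \<Rightarrow> 's set \<Rightarrow> real" where
  "PrReach P \<sigma> s T = (SUP n. reach_le P \<sigma> T (s, []) n)"

datatype cmp = Gt | Ge | Approx rat | NApprox rat

fun cmp_ok :: "cmp \<Rightarrow> bool" where
  "cmp_ok (Approx \<epsilon>) = (\<epsilon> \<ge> 0)"
| "cmp_ok (NApprox \<epsilon>) = (\<epsilon> \<ge> 0)"
| "cmp_ok _ = True"

fun cmp_eval :: "cmp \<Rightarrow> real \<Rightarrow> real \<Rightarrow> bool" where
  "cmp_eval Gt r r' = (r > r')"
| "cmp_eval Ge r r' = (r \<ge> r')"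
| "cmp_eval (Approx \<epsilon>) r r' = (\<bar>r - r'\<bar> \<le> real_of_rat \<epsilon>)"
| "cmp_eval (NApprox \<epsilon>) r r' = (\<bar>r - r'\<bar> > real_of_rat \<epsilon>)"

end

theory Submission
  imports Defs
begin

lemma reach_local:
  assumes "\<And>p. fst p = fst h \<Longrightarrow> \<sigma> p = \<sigma>' p"
  shows "reach_le P \<sigma> T h n = reach_le P \<sigma>' T h n"
  using assms
proof (induction n arbitrary: h)
  case 0
  then show ?case by simp
next
  case (Suc n)
  have "\<And>a s'. reach_le P \<sigma> T (ext h a s') n = reach_le P \<sigma>' T (ext h a s') n"
    by (rule Suc.IH) (simp add: ext_def Suc.prems)
  moreover have "\<sigma> h = \<sigma>' h" using Suc.prems by simp
  ultimately show ?case by simp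
qed

lemma PrReach_local:
  assumes "\<And>p. fst p = s \<Longrightarrow> \<sigma> p = \<sigma>' p"
  shows "PrReach P \<sigma> s T = PrReach P \<sigma>' s T"
  unfolding PrReach_def using reach_local[of "(s,[])" \<sigma> \<sigma>'] assms by simp

lemma default_sched:
  fixes P :: "'s::finite \<Rightarrow> 'a::finite \<Rightarrow> 's \<Rightarrow> real"
  assumes "is_mdp P"
  shows "(\<lambda>p. return_pmf (SOME a. a \<in> enabled P (lst p))) \<in> schedulers P"
proof -
  have "\<And>p::('s,'a) fpath. (SOME a. a \<in> enabled P (lst p)) \<in> enabled P (lst p)"
    using assms unfolding is_mdp_def by (metis ex_in_conv someI_ex)
  then show ?thesis unfolding schedulers_def by (simp del: split_paired_All)
qed

theorem lemma1:
  fixes P :: "'s::finite \<Rightarrow> 'a::finite \<Rightarrow> 's \<Rightarrow> real"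
    and m n :: nat and q :: "nat \<Rightarrow> rat" and s :: "nat \<Rightarrow> 's"
    and k :: "nat \<Rightarrow> nat" and T :: "nat \<Rightarrow> 's set" and comp :: cmp
  assumes "is_mdp P"
    and "m \<ge> n"
    and "k ` {1..m} = {1..n}"
    and "cmp_ok comp"
  shows "(\<exists>\<sigma> :: nat \<Rightarrow> (('s, 'a) fpath \<Rightarrow> 'a pmf).
            (\<forall>i\<in>{1..n}. \<sigma> i \<in> schedulers P) \<and>
            cmp_eval comp (\<Sum>i=1..m. real_of_rat (q i) * PrReach P (\<sigma> (k i)) (s i) (T i))
                          (real_of_rat (q (m + 1))))
     \<longleftrightarrow>
     (\<exists>\<tau> :: 's \<times> nat \<Rightarrow> (('s, 'a) fpath \<Rightarrow> 'a pmf).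
            (\<forall>c\<in>{(s i, k i) | i. i \<in> {1..m}}. \<tau> c \<in> schedulers P) \<and>
            cmp_eval comp
              (\<Sum>c\<in>{(s i, k i) | i. i \<in> {1..m}}.
                  \<Sum>j\<in>{i \<in> {1..m}. (s i, k i) = c}. real_of_rat (q j) * PrReach P (\<tau> c) (s j) (T j))
              (real_of_rat (q (m + 1))))"
proof -
  define C where "C = {(s i, k i) | i. i \<in> {1..m}}"
  have finC: "finite C" unfolding C_def by simp
  have grp: "\<And>h::nat\<Rightarrow>real. (\<Sum>c\<in>C. \<Sum>j\<in>{i \<in> {1..m}. (s i, k i) = c}. h j) = (\<Sum>i=1..m. h i)"
    by (rule sum.group) (auto simp: C_def)
  show ?thesis unfolding C_def[symmetric]
  proof
    assume "\<exists>\<sigma>. (\<forall>i\<in>{1..n}. \<sigma> i \<in> schedulers P) \<and>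
            cmp_eval comp (\<Sum>i=1..m. real_of_rat (q i) * PrReach P (\<sigma> (k i)) (s i) (T i))
                          (real_of_rat (q (m + 1)))"
    then obtain \<sigma> where s1: "\<forall>i\<in>{1..n}. \<sigma> i \<in> schedulers P" and
      s2: "cmp_eval comp (\<Sum>i=1..m. real_of_rat (q i) * PrReach P (\<sigma> (k i)) (s i) (T i))
                          (real_of_rat (q (m + 1)))" by blast
    define \<tau> where "\<tau> = (\<lambda>c::'s\<times>nat. \<sigma> (snd c))"
    have A1: "\<forall>c\<in>C. \<tau> c \<in> schedulers P"
      using s1 assms(3) unfolding C_def \<tau>_def by auto
    have A2: "(\<Sum>c\<in>C. \<Sum>j\<in>{i \<in> {1..m}. (s i, k i) = c}. real_of_rat (q j) * PrReach P (\<tau> c) (s j) (T j))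
       = (\<Sum>c\<in>C. \<Sum>j\<in>{i \<in> {1..m}. (s i, k i) = c}. real_of_rat (q j) * PrReach P (\<sigma> (k j)) (s j) (T j))"
      by (intro sum.cong refl) (auto simp: \<tau>_def)
    show "\<exists>\<tau>. (\<forall>c\<in>C. \<tau> c \<in> schedulers P) \<and>
            cmp_eval comp
              (\<Sum>c\<in>C. \<Sum>j\<in>{i \<in> {1..m}. (s i, k i) = c}. real_of_rat (q j) * PrReach P (\<tau> c) (s j) (T j))
              (real_of_rat (q (m + 1)))"
      by (rule exI[of _ \<tau>]) (use A1 A2 s2 grp in \<open>simp only:\<close>)
  next
    assume "\<exists>\<tau>. (\<forall>c\<in>C. \<tau> c \<in> schedulers P) \<and>
            cmp_eval comp
              (\<Sum>c\<in>C. \<Sum>j\<in>{i \<in> {1..m}. (s i, k i) = c}. real_of_rat (q j) * PrReach P (\<tau> c) (s j) (T j))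
              (real_of_rat (q (m + 1)))"
    then obtain \<tau> where t1: "\<forall>c\<in>C. \<tau> c \<in> schedulers P" and
      t2: "cmp_eval comp
              (\<Sum>c\<in>C. \<Sum>j\<in>{i \<in> {1..m}. (s i, k i) = c}. real_of_rat (q j) * PrReach P (\<tau> c) (s j) (T j))
              (real_of_rat (q (m + 1)))" by blast
    define d :: "('s, 'a) fpath \<Rightarrow> 'a pmf" where "d = (\<lambda>p. return_pmf (SOME a. a \<in> enabled P (lst p)))"
    have d: "d \<in> schedulers P" unfolding d_def by (rule default_sched[OF assms(1)])
    define \<sigma> where "\<sigma> = (\<lambda>kk p. if (fst p, kk) \<in> C then \<tau> (fst p, kk) p else d p)"
    have A1: "\<forall>i\<in>{1..n}. \<sigma> i \<in> schedulers P"
      using t1 d unfolding \<sigma>_def schedulers_def by auto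
    have A2: "(\<Sum>c\<in>C. \<Sum>j\<in>{i \<in> {1..m}. (s i, k i) = c}. real_of_rat (q j) * PrReach P (\<tau> c) (s j) (T j))
       = (\<Sum>c\<in>C. \<Sum>j\<in>{i \<in> {1..m}. (s i, k i) = c}. real_of_rat (q j) * PrReach P (\<sigma> (k j)) (s j) (T j))"
    proof (intro sum.cong refl)
      fix c j assume "c \<in> C" "j \<in> {i \<in> {1..m}. (s i, k i) = c}"
      then have cj: "c = (s j, k j)" "c \<in> C" by auto
      have "PrReach P (\<tau> c) (s j) (T j) = PrReach P (\<sigma> (k j)) (s j) (T j)"
        by (rule PrReach_local) (use cj in \<open>auto simp: \<sigma>_def\<close>)
      then show "real_of_rat (q j) * PrReach P (\<tau> c) (s j) (T j) = real_of_rat (q j) * PrReach P (\<sigma> (k j)) (s j) (T j)"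
        by simp
    qed
    show "\<exists>\<sigma>. (\<forall>i\<in>{1..n}. \<sigma> i \<in> schedulers P) \<and>
            cmp_eval comp (\<Sum>i=1..m. real_of_rat (q i) * PrReach P (\<sigma> (k i)) (s i) (T i))
                          (real_of_rat (q (m + 1)))"
      by (rule exI[of _ \<sigma>]) (use A1 A2 t2 grp in \<open>simp only:\<close>)
  qed
qed

end
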